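(* Fix $n<\omega$ and assume that for every finite quasi-order $P$ the quasi-order $i^F_{\omega^n}(P)$ is a well-quasi-order. Then for every quasi-order $Q$ the following hold. (1) Every $\sigma\in s^F_{=\omega^n}(Q)$ either lies in $i^F_{=\omega^n}(Q)$, or can be written as a concatenation $\sigma=\sigma_0+\sigma_1$ with $\sigma_0\in s^F_{\omega^n}(Q)$ and $\sigma_1\in i^F_{=\omega^n}(Q)$. (2) Every $\sigma\in s^F_{\omega^{n+1}}(Q)$ can be written as a finite concatenation $\sigma_0+\sigma_1+\cdots+\sigma_{k-1}$ with $\sigma_i\in i^F_{\omega^{n+1}}(Q)$ for all $i<k$.
   Context: A well-quasi-order is a quasi-order in which every infinite sequence $(x_i)_{i<\omega}$ has $i<j$ with $x_i\le x_j$. Sequences: a transfinite sequence over $Q$ of length $\alpha$ (with $\alpha\ne0$ an ordinal) is a function $\sigma:\alpha\to Q$, and $|\sigma|=\alpha$; the empty sequence is excluded. Define $\sigma\preceq\tau$ if there is a strictly increasing $f:|\sigma|\to|\tau|$ with $\sigma(i)\le_Q\tau(f(i))$ for all $i$. The concatenation $\sigma+\tau$ has length $|\sigma|+|\tau|$: it equals $\sigma(\iota)$ for $\iota<|\sigma|$ and $\tau(-|\sigma|+\iota)$ for $|\sigma|\le\iota<|\sigma|+|\tau|$. Finite range means the sequence takes finitely many values. A proper tail of $\sigma$ is $i\mapsto\sigma(\delta+i)$ for some $0<\delta<|\sigma|$. The sequence $\sigma$ is indecomposable if it embeds into each of its proper tails. Notation: - $s^F_\alpha(Q)$: finite-range sequences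 of length $<\alpha$; - $i^F_\alpha(Q)$: the indecomposable elements of $s^F_\alpha(Q)$; - $s^F_{=\alpha}(Q)$ and $i^F_{=\alpha}(Q)$: the sequences of length exactly $\alpha$ in $s^F_{\alpha+1}(Q)$ and $i^F_{\alpha+1}(Q)$, respectively. All are ordered by $\preceq$. *)

theory Defs
  imports Main "HOL-Library.Multiset_Order"
begin

text \<open>An ordinal below omega^omega is represented by its Cantor normal form
  omega^e1 + ... + omega^ek (e1 >= ... >= ek), i.e. by the finite multiset
  of exponents {e1,...,ek}.  The multiset order (Multiset_Order) is exactly
  the ordinal order on these normal forms; the empty multiset is 0.\<close>

type_synonym ord = "nat multiset"

definition oomega :: "nat \<Rightarrow> ord"
  where "oomega n = {#n#}"

definition oadd :: "ord \<Rightarrow> ord \<Rightarrow> ord"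
  where "oadd a b = (if b = {#} then a else filter_mset (\<lambda>e. Max_mset b \<le> e) a + b)"

definition osub :: "ord \<Rightarrow> ord \<Rightarrow> ord"
  where "osub d a = (THE g. oadd d g = a)"

text \<open>A transfinite sequence is a pair (length, values); only the values at
  indices below the length are relevant.\<close>

type_synonym 'q tseq = "ord \<times> (ord \<Rightarrow> 'q)"

definition seqs_over :: "'q set \<Rightarrow> 'q tseq set" where
  "seqs_over P = {s. fst s \<noteq> 0 \<and> (\<forall>i < fst s. snd s i \<in> P)}"

definition seq_eq :: "'q tseq \<Rightarrow> 'q tseq \<Rightarrow> bool" where
  "seq_eq s t \<longleftrightarrow> fst s = fst t \<and> (\<forall>i < fst s. snd s i = snd t i)"

definition emb :: "('q \<Rightarrow> 'q \<Rightarrow> bool) \<Rightarrow> 'q tseq \<Rightarrow> 'q tseq \<Rightarrow> bool" where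
  "emb le s t \<longleftrightarrow> (\<exists>f::ord \<Rightarrow> ord.
      (\<forall>i j. i < j \<and> j < fst s \<longrightarrow> f i < f j) \<and>
      (\<forall>i < fst s. f i < fst t \<and> le (snd s i) (snd t (f i))))"

definition finite_range :: "'q tseq \<Rightarrow> bool" where
  "finite_range s \<longleftrightarrow> finite (snd s ` {i. i < fst s})"

definition concat :: "'q tseq \<Rightarrow> 'q tseq \<Rightarrow> 'q tseq" where
  "concat s t = (oadd (fst s) (fst t),
     \<lambda>i. if i < fst s then snd s i else snd t (osub (fst s) i))"

fun concat_list :: "'q tseq list \<Rightarrow> 'q tseq" where
  "concat_list [] = undefined"
| "concat_list [s] = s"
| "concat_list (s # ss) = concat s (concat_list ss)"

definition tail :: "ord \<Rightarrow> 'q tseq \<Rightarrow> 'q tseq" where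
  "tail d s = (osub d (fst s), \<lambda>i. snd s (oadd d i))"

definition indecomposable :: "('q \<Rightarrow> 'q \<Rightarrow> bool) \<Rightarrow> 'q tseq \<Rightarrow> bool" where
  "indecomposable le s \<longleftrightarrow> (\<forall>d. 0 < d \<and> d < fst s \<longrightarrow> emb le s (tail d s))"

definition sF :: "'q set \<Rightarrow> ord \<Rightarrow> 'q tseq set" where
  "sF P a = {s \<in> seqs_over P. fst s < a \<and> finite_range s}"

definition iF :: "('q \<Rightarrow> 'q \<Rightarrow> bool) \<Rightarrow> 'q set \<Rightarrow> ord \<Rightarrow> 'q tseq set" where
  "iF le P a = {s \<in> sF P a. indecomposable le s}"

definition sF_eq :: "'q set \<Rightarrow> ord \<Rightarrow> 'q tseq set" where
  "sF_eq P a = {s \<in> seqs_over P. fst s = a \<and> finite_range s}"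

definition iF_eq :: "('q \<Rightarrow> 'q \<Rightarrow> bool) \<Rightarrow> 'q set \<Rightarrow> ord \<Rightarrow> 'q tseq set" where
  "iF_eq le P a = {s \<in> sF_eq P a. indecomposable le s}"

definition qo_on :: "'a set \<Rightarrow> ('a \<Rightarrow> 'a \<Rightarrow> bool) \<Rightarrow> bool" where
  "qo_on P le \<longleftrightarrow> (\<forall>x\<in>P. le x x) \<and> (\<forall>x\<in>P. \<forall>y\<in>P. \<forall>z\<in>P. le x y \<longrightarrow> le y z \<longrightarrow> le x z)"

definition wqo_on :: "'a set \<Rightarrow> ('a \<Rightarrow> 'a \<Rightarrow> bool) \<Rightarrow> bool" where
  "wqo_on S le \<longleftrightarrow> qo_on S le \<and>
     (\<forall>x::nat \<Rightarrow> 'a. (\<forall>i. x i \<in> S) \<longrightarrow> (\<exists>i j. i < j \<and> le (x i) (x j)))"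

end

theory Submission
  imports Defs
begin

lemma oadd_0r[simp]: "oadd a 0 = a"
  by (simp add: oadd_def)

lemma oadd_0l[simp]: "oadd 0 b = b"
  by (simp add: oadd_def)

lemma oadd_nz: "b \<noteq> 0 \<Longrightarrow> oadd a b = filter_mset (\<lambda>e. Max_mset b \<le> e) a + b"
  unfolding oadd_def by (rule if_not_P)

lemma lt_top: "(\<forall>x\<in>#M. x < e) \<Longrightarrow> e \<in># N \<Longrightarrow> (M::ord) < N"
  using ex_gt_imp_less_multiset by blast

lemma oadd_strict_mono: assumes "b < b'" shows "oadd a b < oadd a b'"
proof (cases "b = 0")
  case True
  then have nz: "b' \<noteq> 0" using assms by auto
  define e' where "e' = Max_mset b'"
  have ein: "e' \<in># b'" using nz e'_def by simp
  have split: "a = filter_mset (\<lambda>x. e' \<le> x) a + filter_mset (\<lambda>x. \<not> e' \<le> x) a"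
    by (simp add: multiset_partition)
  have "filter_mset (\<lambda>x. \<not> e' \<le> x) a < b'"
    by (rule lt_top[OF _ ein]) auto
  then have "a < filter_mset (\<lambda>x. e' \<le> x) a + b'" using split by (metis add_less_cancel_left)
  then show ?thesis using True oadd_nz[OF nz, of a, folded e'_def] by simp
next
  case False
  then have nz: "b' \<noteq> 0" using assms by auto
  define e where "e = Max_mset b"
  define e' where "e' = Max_mset b'"
  have ein: "e \<in># b" using False e_def by simp
  have ein': "e' \<in># b'" using nz e'_def by simp
  have ee: "e \<le> e'"
  proof (rule ccontr)
    assume "\<not> e \<le> e'"
    then have "b' < b" by (intro lt_top[OF _ ein]) (use e'_def in \<open>metis Max_ge finite_set_mset order_le_less_trans not_le\<close>)
    then show False using assms by simp
  qed
  show ?thesis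
  proof (cases "e = e'")
    case True
    then show ?thesis using oadd_nz[OF False, of a] oadd_nz[OF nz, of a] e_def e'_def assms by simp
  next
    case ne: False
    have eq: "filter_mset (\<lambda>x. e \<le> x) a = filter_mset (\<lambda>x. e' \<le> x) a + filter_mset (\<lambda>x. e \<le> x \<and> x < e') a"
      by (rule multiset_eqI) (use ee in auto)
    have "filter_mset (\<lambda>x. e \<le> x \<and> x < e') a + b < b'"
      by (rule lt_top[OF _ ein']) (use ee ne e_def in \<open>auto simp del: Max_le_iff dest!: Max_ge[OF finite_set_mset]\<close>)
    then have "filter_mset (\<lambda>x. e' \<le> x) a + (filter_mset (\<lambda>x. e \<le> x \<and> x < e') a + b)
       < filter_mset (\<lambda>x. e' \<le> x) a + b'" by simp
    then show ?thesis using oadd_nz[OF False, of a] oadd_nz[OF nz, of a] e_def e'_def eq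
      by (simp add: add.assoc)
  qed
qed

lemma Max_oadd: assumes "b \<noteq> 0" "c \<noteq> 0"
  shows "Max_mset (oadd b c) = max (Max_mset b) (Max_mset c)"
proof -
  have S: "set_mset (oadd b c) = {x \<in> set_mset b. Max_mset c \<le> x} \<union> set_mset c"
    using assms by (auto simp: oadd_nz)
  have fin: "finite ({x \<in> set_mset b. Max_mset c \<le> x} \<union> set_mset c)" by simp
  show ?thesis unfolding S
  proof (rule Max_eqI[OF fin])
    fix y assume "y \<in> {x \<in> set_mset b. Max_mset c \<le> x} \<union> set_mset c"
    then show "y \<le> max (Max_mset b) (Max_mset c)"
      by (auto simp del: Max_le_iff intro: le_max_iff_disj[THEN iffD2])
  next
    show "max (Max_mset b) (Max_mset c) \<in> {x \<in> set_mset b. Max_mset c \<le> x} \<union> set_mset c"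
      using assms by (cases "Max_mset c \<le> Max_mset b") (auto simp: max_def simp del: Max_le_iff)
  qed
qed

lemma oadd_assoc: "oadd (oadd a b) c = oadd a (oadd b c)"
proof (cases "b = 0 \<or> c = 0")
  case True then show ?thesis by auto
next
  case False
  then have nz: "b \<noteq> 0" "c \<noteq> 0" by auto
  have nz2: "oadd b c \<noteq> 0" using nz by (simp add: oadd_nz)
  show ?thesis
    using nz nz2 Max_oadd[OF nz]
    by (simp add: oadd_nz, intro multiset_eqI) (auto simp: max_def)
qed

lemma oadd_le: "a \<le> oadd a b"
  using oadd_strict_mono[of 0 b a] by (cases "b = 0") auto

lemma oadd_ge_right: "b \<le> oadd a b"
  by (cases "b = 0") (auto simp: oadd_nz)

lemma oadd_less_iff[simp]: "oadd a b < oadd a b' \<longleftrightarrow> b < b'"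
  by (metis oadd_strict_mono linorder_not_less order_less_asym' order_le_less)

lemma oadd_le_iff[simp]: "oadd a b \<le> oadd a b' \<longleftrightarrow> b \<le> b'"
  by (meson linorder_not_less oadd_less_iff)

lemma oadd_cancel[simp]: "oadd a b = oadd a b' \<longleftrightarrow> b = b'"
  by (metis linorder_neqE oadd_less_iff order_less_irrefl)

lemma oadd_ex: assumes "a \<le> c" shows "\<exists>b. oadd a b = c"
proof (cases "a = c")
  case True then show ?thesis by (intro exI[of _ 0]) simp
next
  case False
  with assms have lt: "a < c" by simp
  define D where "D = {x. count a x \<noteq> count c x}"
  have fD: "finite D" by (rule finite_subset[of _ "set_mset a \<union> set_mset c"]) (auto simp: D_def count_eq_zero_iff[symmetric] simp del: count_eq_zero_iff)
  have neD: "D \<noteq> {}" using False by (auto simp: D_def multiset_eq_iff)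
  define e where "e = Max D"
  have eD: "e \<in> D" using fD neD e_def by simp
  have above: "count a x = count c x" if "e < x" for x
    using that fD e_def D_def Max_ge by fastforce
  have ce: "count a e < count c e"
  proof -
    have "\<not> count c e < count a e"
    proof
      assume "count c e < count a e"
      then obtain x where "x > e" "count a x < count c x" using lt unfolding less_multiset\<^sub>H\<^sub>O by blast
      then show False using above by fastforce
    qed
    then show ?thesis using eD D_def by simp
  qed
  define b where "b = replicate_mset (count c e - count a e) e + filter_mset (\<lambda>x. x < e) c"
  have bnz: "b \<noteq> 0" using ce by (simp add: b_def)
  have Mb: "Max_mset b = e"
    using ce by (intro Max_eqI) (auto simp: b_def)
  have "oadd a b = c"
    unfolding oadd_nz[OF bnz] Mb
    by (rule multiset_eqI) (use above ce in \<open>auto simp: b_def not_le\<close>)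
  then show ?thesis by blast
qed

lemma osub_eq: "oadd d g = a \<Longrightarrow> osub d a = g"
  unfolding osub_def by (rule the_equality) auto

lemma osub_oadd[simp]: "osub d (oadd d g) = g"
  by (rule osub_eq) simp

lemma oadd_osub: "d \<le> a \<Longrightarrow> oadd d (osub d a) = a"
  using oadd_ex osub_eq by metis

lemma osub_lt: "d \<le> i \<Longrightarrow> i < oadd d b \<Longrightarrow> osub d i < b"
  by (metis oadd_osub oadd_less_iff)

lemma osub_mono: "d \<le> u \<Longrightarrow> u < v \<Longrightarrow> osub d u < osub d v"
  by (metis oadd_osub oadd_less_iff order.strict_trans1 order_less_imp_le)

lemma osub_le: "d \<le> a \<Longrightarrow> osub d a \<le> a"
  by (metis oadd_osub oadd_ge_right)

lemma lt_oadd: "i < a \<Longrightarrow> i < oadd a b"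
  using oadd_le order_less_le_trans by blast

lemma osub_pos: "d < a \<Longrightarrow> 0 < osub d a"
  by (metis oadd_0r oadd_osub order_less_imp_le order_less_irrefl le_multiset_empty_left)

lemma oadd_absorb: "d < {#m#} \<Longrightarrow> oadd d {#m#} = {#m#}"
  by (auto simp: oadd_nz intro!: multiset_eqI)

lemma oadd_lt_omega: "a < {#m#} \<Longrightarrow> b < {#m#} \<Longrightarrow> oadd a b < {#m#}"
  by (cases "b = 0") (auto simp: oadd_nz)

lemma osub_omega: "d < {#m#} \<Longrightarrow> osub d {#m#} = {#m#}"
  by (rule osub_eq) (rule oadd_absorb)

definition seg :: "(ord \<Rightarrow> 'q) \<Rightarrow> ord \<Rightarrow> ord \<Rightarrow> 'q tseq" where
  "seg \<sigma> a b = (osub a b, \<lambda>x. \<sigma> (oadd a x))"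

lemma seq_eq_refl[simp]: "seq_eq s s" by (simp add: seq_eq_def)
lemma seq_eq_sym: "seq_eq s t \<Longrightarrow> seq_eq t s" by (simp add: seq_eq_def)
lemma seq_eq_trans: "seq_eq s t \<Longrightarrow> seq_eq t u \<Longrightarrow> seq_eq s u" by (simp add: seq_eq_def)

lemma concat_cong: assumes "seq_eq s s'" "seq_eq t t'" shows "seq_eq (concat s t) (concat s' t')"
proof -
  have f: "fst s = fst s'" "fst t = fst t'" using assms by (auto simp: seq_eq_def)
  have vs: "\<forall>i < fst s. snd s i = snd s' i" and vt: "\<forall>i < fst t. snd t i = snd t' i"
    using assms by (auto simp: seq_eq_def)
  show ?thesis unfolding seq_eq_def
  proof (intro conjI allI impI)
    show "fst (concat s t) = fst (concat s' t')" by (simp add: concat_def f)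
    fix i assume i: "i < fst (concat s t)"
    show "snd (concat s t) i = snd (concat s' t') i"
    proof (cases "i < fst s")
      case True then show ?thesis using vs f by (simp add: concat_def)
    next
      case False
      then have "osub (fst s) i < fst t" using i osub_lt by (simp add: not_less concat_def)
      then show ?thesis using False vt f by (simp add: concat_def)
    qed
  qed
qed

lemmas [trans] = seq_eq_trans

lemma concat_assoc: "seq_eq (concat (concat s t) u) (concat s (concat t u))"
  unfolding seq_eq_def
proof (intro conjI allI impI)
  show "fst (concat (concat s t) u) = fst (concat s (concat t u))"
    by (simp add: concat_def oadd_assoc)
  fix i assume i: "i < fst (concat (concat s t) u)"
  then have i': "i < oadd (oadd (fst s) (fst t)) (fst u)" by (simp add: concat_def)
  show "snd (concat (concat s t) u) i = snd (concat s (concat t u)) i"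
  proof (cases "i < fst s")
    case True
    then show ?thesis by (simp add: concat_def lt_oadd)
  next
    case F1: False
    define j where "j = osub (fst s) i"
    have ij: "i = oadd (fst s) j" using F1 by (simp add: j_def oadd_osub not_less)
    have oj: "osub (fst s) i = j" by (simp add: j_def)
    show ?thesis
    proof (cases "j < fst t")
      case True
      have "i < oadd (fst s) (fst t)" using True by (simp add: ij)
      then show ?thesis using F1 True oj by (simp add: concat_def)
    next
      case False
      have "osub (oadd (fst s) (fst t)) i = osub (fst t) j"
        by (rule osub_eq) (use False in \<open>simp add: ij oadd_assoc oadd_osub not_less\<close>)
      moreover have "\<not> i < oadd (fst s) (fst t)" using False by (simp add: ij)
      ultimately show ?thesis using F1 False oj by (simp add: concat_def)
    qed
  qed
qed

lemma concat_list_Cons: "ss \<noteq> [] \<Longrightarrow> concat_list (s # ss) = concat s (concat_list ss)"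
  by (cases ss) auto

lemma concat_list_append:
  "ss1 \<noteq> [] \<Longrightarrow> ss2 \<noteq> [] \<Longrightarrow> seq_eq (concat_list (ss1 @ ss2)) (concat (concat_list ss1) (concat_list ss2))"
proof (induction ss1 rule: concat_list.induct)
  case 1 then show ?case by simp
next
  case (2 s) then show ?case by (simp add: concat_list_Cons)
next
  case (3 s v va)
  have "seq_eq (concat_list ((s # v # va) @ ss2)) (concat s (concat (concat_list (v # va)) (concat_list ss2)))"
    using 3 by (simp add: concat_list_Cons concat_cong del: concat_list.simps)
  also have "seq_eq \<dots> (concat (concat s (concat_list (v # va))) (concat_list ss2))"
    by (rule seq_eq_sym[OF concat_assoc])
  finally show ?case by (simp add: concat_list_Cons del: concat_list.simps)
qed

lemma seg_concat: assumes "a \<le> b" "b \<le> c"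
  shows "seq_eq (seg \<sigma> a c) (concat (seg \<sigma> a b) (seg \<sigma> b c))"
proof -
  have b: "b = oadd a (osub a b)" using assms by (simp add: oadd_osub)
  have len: "osub a c = oadd (osub a b) (osub b c)"
    by (rule osub_eq) (metis assms b oadd_assoc oadd_osub)
  show ?thesis unfolding seq_eq_def
  proof (intro conjI allI impI)
    show "fst (seg \<sigma> a c) = fst (concat (seg \<sigma> a b) (seg \<sigma> b c))"
      by (simp add: seg_def concat_def len)
    fix i assume "i < fst (seg \<sigma> a c)"
    show "snd (seg \<sigma> a c) i = snd (concat (seg \<sigma> a b) (seg \<sigma> b c)) i"
    proof (cases "i < osub a b")
      case True then show ?thesis by (simp add: seg_def concat_def)
    next
      case False
      have "oadd b (osub (osub a b) i) = oadd a i"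
        using False by (metis b oadd_assoc oadd_osub not_less)
      then show ?thesis using False by (simp add: seg_def concat_def)
    qed
  qed
qed

inductive segm :: "('q \<Rightarrow> 'q \<Rightarrow> bool) \<Rightarrow> (ord \<Rightarrow> 'q) \<Rightarrow> ord \<Rightarrow> ord \<Rightarrow> bool"
  for le \<sigma> where
  base: "a < b \<Longrightarrow> indecomposable le (seg \<sigma> a b) \<Longrightarrow> segm le \<sigma> a b"
| trans: "segm le \<sigma> a b \<Longrightarrow> segm le \<sigma> b c \<Longrightarrow> segm le \<sigma> a c"

lemma segm_lt: "segm le \<sigma> a b \<Longrightarrow> a < b"
  by (induction rule: segm.induct) auto

lemma seg_shift: "a \<le> b \<Longrightarrow> seg (\<lambda>x. \<sigma> (oadd d x)) a b = seg \<sigma> (oadd d a) (oadd d b)"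
proof -
  assume ab: "a \<le> b"
  have "osub (oadd d a) (oadd d b) = osub a b"
    by (rule osub_eq) (simp add: oadd_assoc oadd_osub ab)
  then show ?thesis by (simp add: seg_def oadd_assoc)
qed

lemma segm_shift: "segm le (\<lambda>x. \<sigma> (oadd d x)) a b \<Longrightarrow> segm le \<sigma> (oadd d a) (oadd d b)"
proof (induction rule: segm.induct)
  case (base a b)
  then show ?case by (intro segm.base) (simp_all add: seg_shift)
next
  case (trans a b c)
  then show ?case by (blast intro: segm.trans)
qed

lemma segm_list: "segm le \<sigma> a b \<Longrightarrow> \<exists>ss. ss \<noteq> [] \<and>
   (\<forall>t\<in>set ss. \<exists>c d. a \<le> c \<and> c < d \<and> d \<le> b \<and> t = seg \<sigma> c d \<and> indecomposable le t) \<and>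
   seq_eq (seg \<sigma> a b) (concat_list ss)"
proof (induction rule: segm.induct)
  case (base a b)
  then show ?case by (intro exI[of _ "[seg \<sigma> a b]"]) auto
next
  case (trans a b c)
  from trans.IH(1) obtain ss1 where s1: "ss1 \<noteq> []"
    "\<forall>t\<in>set ss1. \<exists>c d. a \<le> c \<and> c < d \<and> d \<le> b \<and> t = seg \<sigma> c d \<and> indecomposable le t"
    "seq_eq (seg \<sigma> a b) (concat_list ss1)" by blast
  from trans.IH(2) obtain ss2 where s2: "ss2 \<noteq> []"
    "\<forall>t\<in>set ss2. \<exists>c' d. b \<le> c' \<and> c' < d \<and> d \<le> c \<and> t = seg \<sigma> c' d \<and> indecomposable le t"
    "seq_eq (seg \<sigma> b c) (concat_list ss2)" by blast
  have ab: "a < b" "b < c" using trans.hyps segm_lt by blast+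
  have "seq_eq (seg \<sigma> a c) (concat (seg \<sigma> a b) (seg \<sigma> b c))"
    using ab by (intro seg_concat) auto
  also have "seq_eq \<dots> (concat (concat_list ss1) (concat_list ss2))"
    using s1 s2 by (intro concat_cong)
  also have "seq_eq \<dots> (concat_list (ss1 @ ss2))"
    using s1 s2 by (intro seq_eq_sym[OF concat_list_append])
  finally have "seq_eq (seg \<sigma> a c) (concat_list (ss1 @ ss2))" .
  moreover have "\<forall>t\<in>set (ss1 @ ss2). \<exists>c' d. a \<le> c' \<and> c' < d \<and> d \<le> c \<and> t = seg \<sigma> c' d \<and> indecomposable le t"
  proof
    fix t assume "t \<in> set (ss1 @ ss2)"
    then consider "t \<in> set ss1" | "t \<in> set ss2" by auto
    then show "\<exists>c' d. a \<le> c' \<and> c' < d \<and> d \<le> c \<and> t = seg \<sigma> c' d \<and> indecomposable le t"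
    proof cases
      case 1
      then obtain c' d where "a \<le> c'" "c' < d" "d \<le> b" "t = seg \<sigma> c' d" "indecomposable le t"
        using s1(2) by blast
      moreover have "d \<le> c" using \<open>d \<le> b\<close> ab by simp
      ultimately show ?thesis by blast
    next
      case 2
      then obtain c' d where "b \<le> c'" "c' < d" "d \<le> c" "t = seg \<sigma> c' d" "indecomposable le t"
        using s2(2) by blast
      moreover have "a \<le> c'" using \<open>b \<le> c'\<close> ab by simp
      ultimately show ?thesis by blast
    qed
  qed
  ultimately show ?case using s1 by (intro exI[of _ "ss1 @ ss2"]) auto
qed

lemma segm_chain: "segm le \<sigma> a b \<Longrightarrow> \<exists>r f. 0 < r \<and> f 0 = a \<and> f r = b \<and>
   (\<forall>i<r. f i < f (Suc i) \<and> indecomposable le (seg \<sigma> (f i) (f (Suc i))))"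
proof (induction rule: segm.induct)
  case (base a b)
  then show ?case by (intro exI[of _ 1] exI[of _ "\<lambda>i. if i = 0 then a else b"]) auto
next
  case (trans a b c)
  from trans.IH obtain r1 f1 r2 f2 where
    h1: "0 < r1" "f1 0 = a" "f1 r1 = b" "\<forall>i<r1. f1 i < f1 (Suc i) \<and> indecomposable le (seg \<sigma> (f1 i) (f1 (Suc i)))"
    and h2: "0 < r2" "f2 0 = b" "f2 r2 = c" "\<forall>i<r2. f2 i < f2 (Suc i) \<and> indecomposable le (seg \<sigma> (f2 i) (f2 (Suc i)))"
    by blast
  define f where "f i = (if i \<le> r1 then f1 i else f2 (i - r1))" for i
  have "\<forall>i<r1+r2. f i < f (Suc i) \<and> indecomposable le (seg \<sigma> (f i) (f (Suc i)))"
  proof (intro allI impI)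
    fix i assume i: "i < r1 + r2"
    show "f i < f (Suc i) \<and> indecomposable le (seg \<sigma> (f i) (f (Suc i)))"
    proof (cases "i < r1")
      case True then show ?thesis using h1 by (simp add: f_def)
    next
      case False
      then have "f i = f2 (i - r1)" "f (Suc i) = f2 (Suc (i - r1))"
        using h1 h2 by (auto simp: f_def Suc_diff_le)
      then show ?thesis using h2 i False by simp
    qed
  qed
  then show ?case using h1 h2 by (intro exI[of _ "r1+r2"] exI[of _ f]) (auto simp: f_def)
qed

lemma chain_mono: assumes "\<forall>i<r. (f::nat \<Rightarrow> ord) i < f (Suc i)"
  shows "i \<le> j \<Longrightarrow> j \<le> r \<Longrightarrow> f i \<le> f j"
proof (induction j)
  case 0 then show ?case by simp
next
  case (Suc j)
  show ?case
  proof (cases "i = Suc j")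
    case False
    then have "i \<le> j" using Suc.prems by simp
    then have "f i \<le> f j" using Suc.IH Suc.prems by simp
    moreover have "f j < f (Suc j)" using assms Suc.prems by (simp add: Suc_le_lessD)
    ultimately show ?thesis by (meson order_le_less_trans order_less_imp_le)
  qed simp
qed

fun stp :: "(nat \<Rightarrow> nat) \<Rightarrow> (nat \<Rightarrow> nat) \<Rightarrow> nat \<Rightarrow> nat \<times> nat" where
  "stp nx J 0 = (nx 0, J (nx 0))"
| "stp nx J (Suc n) = (let i = nx (max (Suc (fst (stp nx J n))) (snd (stp nx J n))) in (i, max (snd (stp nx J n)) (J i)))"

lemma eventually_good:
  fixes x :: "nat \<Rightarrow> 'a"
  assumes good: "\<And>h::nat\<Rightarrow>nat. strict_mono h \<Longrightarrow> \<exists>i j. i < j \<and> R (x (h i)) (x (h j))"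
  shows "\<exists>N. \<forall>i\<ge>N. \<forall>j. \<exists>k\<ge>j. R (x i) (x k)"
proof (rule ccontr)
  assume "\<not> ?thesis"
  then have bad: "\<forall>N. \<exists>i\<ge>N. \<exists>j. \<forall>k\<ge>j. \<not> R (x i) (x k)" by blast
  define B where "B i = (\<exists>j. \<forall>k\<ge>j. \<not> R (x i) (x k))" for i
  define nx where "nx N = (SOME i. i \<ge> N \<and> B i)" for N
  define J where "J i = (SOME j. \<forall>k\<ge>j. \<not> R (x i) (x k))" for i
  have nx: "nx N \<ge> N \<and> B (nx N)" for N
    unfolding nx_def by (rule someI_ex) (use bad B_def in blast)
  have J: "B i \<Longrightarrow> \<forall>k\<ge>J i. \<not> R (x i) (x k)" for i
    unfolding J_def B_def by (rule someI_ex)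
  define h where "h n = fst (stp nx J n)" for n
  define b where "b n = snd (stp nx J n)" for n
  have hr: "\<exists>N. h n = nx N" for n by (cases n) (auto simp: h_def Let_def)
  have Bh: "B (h n)" for n using hr[of n] nx by auto
  have bJ: "J (h n) \<le> b n" for n by (cases n) (simp_all add: h_def b_def Let_def)
  have bmono: "b n \<le> b (Suc n)" for n by (simp add: b_def Let_def)
  have hb: "b n \<le> h (Suc n)" "h n < h (Suc n)" for n
  proof -
    have "h (Suc n) = nx (max (Suc (h n)) (b n))" by (simp add: h_def b_def Let_def)
    then show "b n \<le> h (Suc n)" "h n < h (Suc n)" using nx[of "max (Suc (h n)) (b n)"] by auto
  qed
  have sm: "strict_mono h" using hb(2) by (simp add: strict_mono_Suc_iff)
  have bm: "l \<le> n \<Longrightarrow> b l \<le> b n" for l n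
  proof (induction n)
    case 0 then show ?case by simp
  next
    case (Suc n)
    show ?case
    proof (cases "l = Suc n")
      case False
      then have "b l \<le> b n" using Suc by simp
      then show ?thesis using bmono[of n] by simp
    qed simp
  qed
  have "\<not> R (x (h l)) (x (h n))" if ln: "l < n" for l n
  proof -
    obtain n' where n': "n = Suc n'" "l \<le> n'" using ln by (cases n) auto
    have "J (h l) \<le> h n" using bJ[of l] bm[OF n'(2)] hb(1)[of n'] n' by simp
    then show ?thesis using J[OF Bh[of l]] by blast
  qed
  then show False using good[OF sm] by blast
qed


fun gs :: "(nat \<Rightarrow> nat \<Rightarrow> nat) \<Rightarrow> nat \<Rightarrow> nat \<Rightarrow> nat \<Rightarrow> nat" where
  "gs pk N M 0 = pk N M"
| "gs pk N M (Suc n) = pk (N + Suc n) (Suc (gs pk N M n))"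

fun pos :: "(nat \<Rightarrow> nat) \<Rightarrow> nat \<Rightarrow> nat \<times> nat" where
  "pos r 0 = (0, 0)"
| "pos r (Suc j) = (if Suc (snd (pos r j)) < r (fst (pos r j)) then (fst (pos r j), Suc (snd (pos r j)))
                    else (Suc (fst (pos r j)), 0))"

lemma pos_lt: "(\<forall>k. 0 < r k) \<Longrightarrow> snd (pos r j) < r (fst (pos r j))"
  by (induction j) auto

lemma pos_run: assumes "pos r j = (k, 0)" "i < r k"
  shows "pos r (j + i) = (k, i)"
  using assms(2)
proof (induction i)
  case 0 then show ?case using assms(1) by simp
next
  case (Suc i) then show ?case by simp
qed

lemma pos_next: assumes "\<forall>k. 0 < r k" "pos r j = (k, 0)"
  shows "pos r (j + r k) = (Suc k, 0)"
proof -
  obtain i where i: "r k = Suc i" using assms(1) by (metis gr0_conv_Suc)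
  have "pos r (j + i) = (k, i)" using pos_run[OF assms(2)] i by simp
  then show ?thesis using i by simp
qed

lemma pos_ex: assumes "\<forall>k. 0 < r k" shows "\<exists>j. pos r j = (k, 0)"
proof (induction k)
  case 0 then show ?case by (intro exI[of _ 0]) simp
next
  case (Suc k) then show ?case using pos_next[OF assms] by blast
qed

lemma emb_seg_F:
  assumes cL: "c \<le> L" and eL: "e \<le> L"
    and mono: "\<And>y y'. c \<le> y \<Longrightarrow> y < y' \<Longrightarrow> y' < L \<Longrightarrow> F y < F y'"
    and rng: "\<And>y. c \<le> y \<Longrightarrow> y < L \<Longrightarrow> e \<le> F y \<and> F y < L \<and> le (\<sigma> y) (\<sigma> (F y))"
  shows "emb le (seg \<sigma> c L) (seg \<sigma> e L)"
  unfolding emb_def seg_def fst_conv snd_conv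
proof (intro exI[of _ "\<lambda>x. osub e (F (oadd c x))"] conjI allI impI)
  have inL: "oadd c x < L" if "x < osub c L" for x
    using that cL by (metis oadd_less_iff oadd_osub)
  fix i j assume ij: "i < j \<and> j < osub c L"
  then have "F (oadd c i) < F (oadd c j)" using mono[of "oadd c i" "oadd c j"] inL oadd_le by auto
  moreover have "e \<le> F (oadd c i)" using rng[of "oadd c i"] inL ij oadd_le by (meson order.strict_trans)
  ultimately show "osub e (F (oadd c i)) < osub e (F (oadd c j))" by (rule osub_mono[rotated])
next
  have inL: "oadd c x < L" if "x < osub c L" for x
    using that cL by (metis oadd_less_iff oadd_osub)
  fix i assume i: "i < osub c L"
  have r: "e \<le> F (oadd c i) \<and> F (oadd c i) < L \<and> le (\<sigma> (oadd c i)) (\<sigma> (F (oadd c i)))"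
    using rng[of "oadd c i"] inL[OF i] oadd_le by auto
  then show "osub e (F (oadd c i)) < osub e L" using osub_mono by blast
  show "le (\<sigma> (oadd c i)) (\<sigma> (oadd e (osub e (F (oadd c i)))))"
    using r by (simp add: oadd_osub)
qed

lemma emb_cong: assumes "seq_eq s s'" "seq_eq t t'" "emb le s t" shows "emb le s' t'"
proof -
  obtain f where f: "\<forall>i j. i < j \<and> j < fst s \<longrightarrow> f i < f j"
    "\<forall>i < fst s. f i < fst t \<and> le (snd s i) (snd t (f i))"
    using assms(3) unfolding emb_def by blast
  have e: "fst s = fst s'" "fst t = fst t'" "\<forall>i < fst s. snd s i = snd s' i" "\<forall>i < fst t. snd t i = snd t' i"
    using assms(1,2) unfolding seq_eq_def by auto
  show ?thesis unfolding emb_def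
    by (rule exI[of _ f]) (use f e in auto)
qed

lemma tail_cong: assumes "seq_eq s s'" "d \<le> fst s" shows "seq_eq (tail d s) (tail d s')"
proof -
  have e: "fst s = fst s'" "\<forall>i < fst s. snd s i = snd s' i"
    using assms(1) unfolding seq_eq_def by auto
  have "oadd d i < fst s" if "i < osub d (fst s)" for i
    using that assms(2) by (metis oadd_less_iff oadd_osub)
  then show ?thesis using e unfolding seq_eq_def tail_def by auto
qed

lemma indec_cong: assumes "seq_eq s t" "indecomposable le s" shows "indecomposable le t"
  unfolding indecomposable_def
proof (intro allI impI)
  fix d assume d: "0 < d \<and> d < fst t"
  have f: "fst s = fst t" using assms by (simp add: seq_eq_def)
  then have "emb le s (tail d s)" using assms d by (simp add: indecomposable_def)
  moreover have "seq_eq (tail d s) (tail d t)" using tail_cong[OF assms(1)] d f by (simp add: order_less_imp_le)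
  ultimately show "emb le t (tail d t)" using emb_cong assms(1) by blast
qed

lemma emb_map:
  assumes inj: "inj_on g R" and s: "range (snd s) \<subseteq> R" and t: "range (snd t) \<subseteq> R"
  shows "emb (\<lambda>a b. le (inv_into R g a) (inv_into R g b)) (fst s, g \<circ> snd s) (fst t, g \<circ> snd t) \<longleftrightarrow> emb le s t"
proof -
  have "inv_into R g (g (snd s i)) = snd s i" for i using inj s by (simp add: image_subset_iff)
  moreover have "inv_into R g (g (snd t i)) = snd t i" for i using inj t by (simp add: image_subset_iff)
  ultimately show ?thesis unfolding emb_def by simp
qed

lemma good_from_hyp:
  fixes le :: "'q \<Rightarrow> 'q \<Rightarrow> bool" and \<sigma> :: "ord \<Rightarrow> 'q" and x :: "nat \<Rightarrow> 'q tseq"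
  assumes hyp: "\<And>(P :: nat set) (leP :: nat \<Rightarrow> nat \<Rightarrow> bool).
                  finite P \<Longrightarrow> qo_on P leP \<Longrightarrow> wqo_on (iF leP P (oomega n)) (emb leP)"
    and Q: "qo_on UNIV le" and fin: "finite (range \<sigma>)" and mn: "m \<le> n"
    and xs: "\<And>i. fst (x i) < {#m#} \<and> 0 < fst (x i) \<and> indecomposable le (x i) \<and> range (snd (x i)) \<subseteq> range \<sigma>"
  shows "\<exists>i j. i < j \<and> emb le (x i) (x j)"
proof -
  define R where "R = range \<sigma>"
  obtain g :: "'q \<Rightarrow> nat" where inj: "inj_on g R"
    using finite_imp_inj_to_nat_seg[of R] fin R_def by blast
  define P where "P = g ` R"
  define leP where "leP a b = le (inv_into R g a) (inv_into R g b)" for a b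
  have finP: "finite P" using fin by (simp add: P_def R_def)
  have inv: "\<And>v. v \<in> R \<Longrightarrow> inv_into R g (g v) = v" using inj by (simp add: inv_into_f_f)
  have Q1: "\<And>v. le v v" and Q2: "\<And>u v w. le u v \<Longrightarrow> le v w \<Longrightarrow> le u w"
    using Q unfolding qo_on_def by blast+
  have qo: "qo_on P leP"
    unfolding qo_on_def P_def leP_def
  proof (intro conjI ballI impI)
    fix a assume "a \<in> g ` R"
    show "le (inv_into R g a) (inv_into R g a)" by (rule Q1)
  next
    fix a b c assume "le (inv_into R g a) (inv_into R g b)" "le (inv_into R g b) (inv_into R g c)"
    then show "le (inv_into R g a) (inv_into R g c)" by (rule Q2)
  qed
  define y where "y i = (fst (x i), g \<circ> snd (x i))" for i
  have rng: "range (snd (x k)) \<subseteq> R" for k using xs R_def by blast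
  have em: "emb leP (fst s, g \<circ> snd s) (fst t, g \<circ> snd t) \<longleftrightarrow> emb le s t"
    if "range (snd s) \<subseteq> R" "range (snd t) \<subseteq> R" for s t
    unfolding leP_def by (rule emb_map[OF inj that])
  have yin: "y i \<in> iF leP P (oomega n)" for i
  proof -
    have xi: "fst (x i) < {#m#}" "0 < fst (x i)" "indecomposable le (x i)"
      using xs[of i] by auto
    have vals: "g (snd (x i) k) \<in> P" for k using rng[of i] by (auto simp: P_def)
    have "fst (x i) < {#n#}" using xi(1) mn by auto
    then have len: "fst (y i) < oomega n" by (simp add: y_def oomega_def)
    have so: "y i \<in> seqs_over P" using xi(2) vals by (simp add: seqs_over_def y_def)
    have fr: "finite_range (y i)" unfolding finite_range_def
      by (rule finite_subset[OF _ finP]) (use vals in \<open>auto simp: y_def\<close>)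
    have ind: "indecomposable leP (y i)" unfolding indecomposable_def
    proof (intro allI impI)
      fix d assume d: "0 < d \<and> d < fst (y i)"
      then have e1: "emb le (x i) (tail d (x i))" using xi by (simp add: indecomposable_def y_def)
      have r2: "range (snd (tail d (x i))) \<subseteq> R" using rng[of i] by (auto simp: tail_def)
      have e2: "tail d (y i) = (fst (tail d (x i)), g \<circ> snd (tail d (x i)))"
        by (simp add: tail_def y_def comp_def)
      show "emb leP (y i) (tail d (y i))"
        unfolding e2 using em[OF rng[of i] r2] e1 by (simp add: y_def)
    qed
    show ?thesis using len so fr ind by (simp add: iF_def sF_def)
  qed
  have W: "wqo_on (iF leP P (oomega n)) (emb leP)" by (rule hyp[OF finP qo])
  have W2: "\<forall>z::nat \<Rightarrow> ord \<times> (ord \<Rightarrow> nat). (\<forall>i. z i \<in> iF leP P (oomega n)) \<longrightarrow> (\<exists>i j. i < j \<and> emb leP (z i) (z j))"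
    using W unfolding wqo_on_def by (rule conjunct2)
  have "(\<forall>i. y i \<in> iF leP P (oomega n)) \<longrightarrow> (\<exists>i j. i < j \<and> emb leP (y i) (y j))"
    using spec[OF W2, of y] by simp
  then obtain i j where ij: "i < j" "emb leP (y i) (y j)" using yin by blast
  then have "emb le (x i) (x j)" using em[OF rng[of i] rng[of j]] by (simp add: y_def)
  then show ?thesis using ij(1) by blast
qed

lemma rep_le: "(\<forall>a\<in>#\<alpha>. a \<le> m) \<Longrightarrow> \<alpha> \<le> replicate_mset (size \<alpha>) (m::nat)"
proof (induction \<alpha>)
  case empty then show ?case by simp
next
  case (add a \<alpha>)
  then have "a \<le> m" "\<alpha> \<le> replicate_mset (size \<alpha>) m" by auto
  then have "add_mset a \<alpha> \<le> add_mset m (replicate_mset (size \<alpha>) m)"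
    by (rule add_mset_le_le_le)
  then show ?case by simp
qed

lemma C1_step:
  fixes \<sigma> :: "ord \<Rightarrow> 'q" and m' :: nat and le :: "'q \<Rightarrow> 'q \<Rightarrow> bool"
  assumes fin: "finite (range \<sigma>)"
    and C2: "\<And>(\<sigma>'::ord \<Rightarrow> 'q) \<gamma>. finite (range \<sigma>') \<Longrightarrow> 0 < \<gamma> \<Longrightarrow> \<gamma> < {#Suc m'#} \<Longrightarrow> segm le \<sigma>' 0 \<gamma>"
    and good: "\<And>x::nat \<Rightarrow> 'q tseq. (\<And>i. fst (x i) < {#Suc m'#} \<and> 0 < fst (x i) \<and> indecomposable le (x i) \<and> range (snd (x i)) \<subseteq> range \<sigma>)
        \<Longrightarrow> \<exists>i j. i < j \<and> emb le (x i) (x j)"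
  shows "\<exists>c. c < {#Suc m'#} \<and> indecomposable le (seg \<sigma> c {#Suc m'#})"
proof -
  define W where "W = {#Suc m'#}"
  define w where "w = {#m'#}"
  define B where "B k = replicate_mset k m'" for k
  have B0: "B 0 = 0" by (simp add: B_def)
  have BS: "oadd (B k) w = B (Suc k)" for k
  proof -
    have "oadd (B k) w = filter_mset (\<lambda>e. Max_mset w \<le> e) (B k) + w" by (rule oadd_nz) (simp add: w_def)
    then show ?thesis by (simp add: w_def B_def, intro multiset_eqI) simp
  qed
  have BW: "B k < W" for k by (auto simp: B_def W_def)
  have wpos: "0 < w" by (simp add: w_def)
  have Blt: "B k < B (Suc k)" for k
    using oadd_strict_mono[OF wpos, of "B k"] BS[of k] by simp
  have Bcof: "\<exists>k. \<alpha> < B k" if "\<alpha> < W" for \<alpha>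
  proof -
    have "\<forall>a\<in>#\<alpha>. a \<le> m'" using that by (auto simp: W_def)
    then have "\<alpha> \<le> B (size \<alpha>)" unfolding B_def by (rule rep_le)
    then show ?thesis using Blt by (meson order_le_less_trans)
  qed
  have blocks: "segm le \<sigma> (B k) (B (Suc k))" for k
  proof -
    have "range (\<lambda>x. \<sigma> (oadd (B k) x)) \<subseteq> range \<sigma>" by auto
    then have "finite (range (\<lambda>x. \<sigma> (oadd (B k) x)))" using fin finite_subset by blast
    then have "segm le (\<lambda>x. \<sigma> (oadd (B k) x)) 0 w" by (rule C2) (auto simp: w_def)
    then have "segm le \<sigma> (oadd (B k) 0) (oadd (B k) w)" by (rule segm_shift)
    then show ?thesis using BS by simp
  qed
  define PR where "PR k r f \<longleftrightarrow> 0 < r \<and> f 0 = B k \<and> f r = B (Suc k) \<and>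
      (\<forall>i<r. f i < f (Suc i) \<and> indecomposable le (seg \<sigma> (f i) (f (Suc i))))" for k r and f :: "nat \<Rightarrow> ord"
  have "\<forall>k. \<exists>q. PR k (fst q) (snd q)"
  proof
    fix k
    obtain r f where "PR k r f" using segm_chain[OF blocks[of k]] unfolding PR_def by blast
    then show "\<exists>q. PR k (fst q) (snd q)" by (intro exI[of _ "(r, f)"]) simp
  qed
  then obtain RF where RF: "\<forall>k. PR k (fst (RF k)) (snd (RF k))" by (metis choice)
  define rr where "rr k = fst (RF k)" for k
  define ff where "ff k = snd (RF k)" for k
  have rpos: "\<forall>k. 0 < rr k" and ff0: "\<And>k. ff k 0 = B k" and ffr: "\<And>k. ff k (rr k) = B (Suc k)"
    and ffs: "\<And>k i. i < rr k \<Longrightarrow> ff k i < ff k (Suc i) \<and> indecomposable le (seg \<sigma> (ff k i) (ff k (Suc i)))"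
    using RF unfolding PR_def rr_def ff_def by auto
  have ffmono: "ff k i \<le> ff k j" if "i \<le> j" "j \<le> rr k" for k i j
    using chain_mono[of "rr k" "ff k" i j] ffs that by blast
  define p where "p j = ff (fst (pos rr j)) (snd (pos rr j))" for j
  have pl: "snd (pos rr j) < rr (fst (pos rr j))" for j using pos_lt[OF rpos] .
  have pS: "p (Suc j) = ff (fst (pos rr j)) (Suc (snd (pos rr j)))" for j
  proof (cases "Suc (snd (pos rr j)) < rr (fst (pos rr j))")
    case True then show ?thesis by (simp add: p_def)
  next
    case False
    then have "Suc (snd (pos rr j)) = rr (fst (pos rr j))" using pl[of j] by simp
    then show ?thesis using False by (simp add: p_def ff0 ffr)
  qed
  have pstep: "p j < p (Suc j) \<and> indecomposable le (seg \<sigma> (p j) (p (Suc j)))" for j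
    using ffs[OF pl[of j]] pS[of j] by (simp add: p_def)
  have pbound: "p j < B (Suc (fst (pos rr j)))" for j
  proof -
    have "p (Suc j) \<le> B (Suc (fst (pos rr j)))"
      using pS[of j] ffmono[of "Suc (snd (pos rr j))" "rr (fst (pos rr j))" "fst (pos rr j)"] pl[of j] ffr
      by simp
    moreover have "p j < p (Suc j)" using pstep[of j] by blast
    ultimately show ?thesis by (meson order_less_le_trans)
  qed
  have p0: "p 0 = 0" by (simp add: p_def ff0 B0)
  have pW: "p j < W" for j using pbound[of j] BW order.strict_trans by blast
  have smp: "strict_mono p" using pstep by (simp add: strict_mono_Suc_iff)
  have pmono: "i \<le> j \<Longrightarrow> p i \<le> p j" for i j using smp by (simp add: strict_mono_less_eq)
  have pcof: "\<exists>j. \<alpha> < p j" if aW: "\<alpha> < W" for \<alpha>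
  proof -
    obtain k where k: "\<alpha> < B k" using Bcof[OF aW] by blast
    obtain j where "pos rr j = (k, 0)" using pos_ex[OF rpos] by blast
    then have "p j = B k" by (simp add: p_def ff0)
    then have "\<alpha> < p j" using k by simp
    then show ?thesis by blast
  qed
  define x where "x j = seg \<sigma> (p j) (p (Suc j))" for j
  have xprop: "fst (x j) < W \<and> 0 < fst (x j) \<and> indecomposable le (x j) \<and> range (snd (x j)) \<subseteq> range \<sigma>" for j
  proof -
    have "fst (x j) \<le> p (Suc j)" using osub_le pstep[of j] by (simp add: x_def seg_def order_less_imp_le)
    then have "fst (x j) < W" using pW[of "Suc j"] by simp
    moreover have "0 < fst (x j)" using osub_pos pstep[of j] by (simp add: x_def seg_def)
    ultimately show ?thesis using pstep[of j] by (auto simp: x_def seg_def)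
  qed
  have "\<exists>N. \<forall>i\<ge>N. \<forall>j. \<exists>k\<ge>j. emb le (x i) (x k)"
  proof (rule eventually_good)
    fix h :: "nat \<Rightarrow> nat" assume "strict_mono h"
    show "\<exists>i j. i < j \<and> emb le (x (h i)) (x (h j))"
      by (rule good[of "\<lambda>i. x (h i)"]) (use xprop W_def in simp)
  qed
  then obtain N where EG: "\<forall>i\<ge>N. \<forall>j. \<exists>k\<ge>j. emb le (x i) (x k)" by blast
  define c where "c = p N"
  have cW: "c < W" using pW by (simp add: c_def)
  define J where "J y = (LEAST j. y < p (Suc j))" for y
  have Jprop: "p (J y) \<le> y \<and> y < p (Suc (J y))" if yW: "y < W" for y
  proof -
    obtain j where "y < p j" using pcof[OF yW] by blast
    then have ex: "\<exists>j. y < p (Suc j)" using pmono[of j "Suc j"] by (meson le_SucI order_less_le_trans order_refl)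
    have a: "y < p (Suc (J y))" unfolding J_def by (rule LeastI_ex[OF ex])
    have "p (J y) \<le> y"
    proof (cases "J y")
      case 0 then show ?thesis by (simp add: p0)
    next
      case (Suc j')
      then have "\<not> y < p (Suc j')" using not_less_Least[of j' "\<lambda>j. y < p (Suc j)"] by (simp add: J_def)
      then show ?thesis using Suc by simp
    qed
    then show ?thesis using a by simp
  qed
  have JN: "N \<le> J y" if "c \<le> y" "y < W" for y
  proof (rule ccontr)
    assume "\<not> N \<le> J y"
    then have "p (Suc (J y)) \<le> p N" using pmono by simp
    moreover have "y < p (Suc (J y))" using Jprop[OF that(2)] by blast
    ultimately have "y < p N" using order_less_le_trans by blast
    then show False using that(1) c_def by simp
  qed
  have Jmono: "J y \<le> J y'" if "y < y'" "y' < W" for y y'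
  proof (rule ccontr)
    assume "\<not> J y \<le> J y'"
    then have "p (Suc (J y')) \<le> p (J y)" using pmono by simp
    moreover have "y < W" using that by simp
    moreover have "y' < p (Suc (J y'))" using Jprop[of y'] that by blast
    moreover have "p (J y) \<le> y" using Jprop[of y] \<open>y < W\<close> by blast
    ultimately have "y' < y" by (meson order_less_le_trans)
    then show False using that(1) by simp
  qed
  show ?thesis
  proof (intro exI[of _ c] conjI)
    show "c < {#Suc m'#}" using cW unfolding W_def .
    show "indecomposable le (seg \<sigma> c {#Suc m'#})"
      unfolding indecomposable_def W_def[symmetric]
    proof (intro allI impI)
      fix d assume d: "0 < d \<and> d < fst (seg \<sigma> c W)"
      have oW: "osub c W = W" using osub_omega[of c "Suc m'"] cW unfolding W_def by blast
      then have dW: "d < W" using d unfolding seg_def fst_conv by simp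
      define e where "e = oadd c d"
      have ce: "c < e" using oadd_strict_mono[of 0 d c] d unfolding e_def oadd_0r by blast
      have eW: "e < W" using oadd_lt_omega[of c "Suc m'" d] cW dW unfolding W_def e_def by blast
      have tl: "tail d (seg \<sigma> c W) = seg \<sigma> e W"
        using oW eW dW by (simp add: tail_def seg_def e_def W_def osub_omega oadd_assoc)
      obtain M where M: "e < p M" using pcof[OF eW] by blast
      define pk where "pk i lb = (SOME k. lb \<le> k \<and> emb le (x i) (x k))" for i lb
      have pk: "lb \<le> pk i lb \<and> emb le (x i) (x (pk i lb))" if "N \<le> i" for i lb
        unfolding pk_def by (rule someI_ex) (use EG that in blast)
      define G where "G n = gs pk N M n" for n
      have G0: "M \<le> G 0" using pk[of N M] by (simp add: G_def)
      have Gemb: "emb le (x (N + n)) (x (G n))" for n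
        using pk by (cases n) (simp_all add: G_def)
      have GS: "G n < G (Suc n)" for n
        using pk[of "N + Suc n" "Suc (G n)"] by (simp add: G_def)
      have smG: "strict_mono G" using GS by (simp add: strict_mono_Suc_iff)
      define HP where "HP n f \<longleftrightarrow> (\<forall>i j. i < j \<and> j < fst (x (N + n)) \<longrightarrow> f i < f j) \<and>
            (\<forall>i < fst (x (N + n)). f i < fst (x (G n)) \<and> le (snd (x (N + n)) i) (snd (x (G n)) (f i)))"
        for n and f :: "ord \<Rightarrow> ord"
      have "\<forall>n. \<exists>f. HP n f"
      proof
        fix n
        show "\<exists>f. HP n f" using Gemb[of n] unfolding emb_def HP_def by assumption
      qed
      then have "\<exists>hh. \<forall>n. HP n (hh n)" by (rule choice)
      then obtain hh where hhP: "\<forall>n. HP n (hh n)" by (erule exE)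
      have hh: "\<And>n i j. i < j \<Longrightarrow> j < fst (x (N + n)) \<Longrightarrow> hh n i < hh n j"
        "\<And>n i. i < fst (x (N + n)) \<Longrightarrow> hh n i < fst (x (G n)) \<and> le (snd (x (N + n)) i) (snd (x (G n)) (hh n i))"
        using hhP unfolding HP_def by blast+
      define F where "F y = oadd (p (G (J y - N))) (hh (J y - N) (osub (p (J y)) y))" for y
      have Fb: "p (G (J y - N)) \<le> F y \<and> F y < p (Suc (G (J y - N))) \<and> le (\<sigma> y) (\<sigma> (F y))"
        if y: "c \<le> y" "y < W" for y
      proof -
        define n where "n = J y - N"
        have jn: "J y = N + n" using JN[OF y] by (simp add: n_def)
        define z where "z = osub (p (J y)) y"
        have jp: "p (J y) \<le> y" "y < p (Suc (J y))" using Jprop[OF y(2)] by auto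
        have zlt: "z < fst (x (N + n))"
          using osub_mono[OF jp] jn by (simp add: z_def x_def seg_def)
        have h1: "hh n z < fst (x (G n))" and h2: "le (snd (x (N + n)) z) (snd (x (G n)) (hh n z))"
          using hh(2)[OF zlt] by auto
        have pG: "p (G n) \<le> p (Suc (G n))" using pmono by simp
        have "F y < oadd (p (G n)) (osub (p (G n)) (p (Suc (G n))))"
          using h1 by (simp add: F_def n_def[symmetric] z_def[symmetric] x_def seg_def)
        then have "F y < p (Suc (G n))" using pG by (simp add: oadd_osub)
        moreover have "p (G n) \<le> F y" by (simp add: F_def n_def[symmetric] oadd_le)
        moreover have "oadd (p (N + n)) z = y" using jp jn by (simp add: z_def oadd_osub)
        then have "le (\<sigma> y) (\<sigma> (F y))" using h2 jn
          by (simp add: x_def seg_def F_def n_def[symmetric] z_def)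
        ultimately show ?thesis by (simp add: n_def)
      qed
      have "emb le (seg \<sigma> c W) (seg \<sigma> e W)"
      proof (rule emb_seg_F[where F = F])
        show "c \<le> W" "e \<le> W" using cW eW by simp_all
      next
        fix y assume y: "c \<le> y" "y < W"
        have "e < p (G (J y - N))"
          using M pmono[of M "G 0"] G0 pmono[of "G 0" "G (J y - N)"] smG
          by (meson le0 order_less_le_trans strict_mono_less_eq)
        then show "e \<le> F y \<and> F y < W \<and> le (\<sigma> y) (\<sigma> (F y))"
          using Fb[OF y] pW by (meson order_le_less_trans order_less_imp_le order.strict_trans1 order.trans)
      next
        fix y y' assume yy: "c \<le> y" "y < y'" "y' < W"
        have y1: "c \<le> y" "y < W" using yy by auto
        have y2: "c \<le> y'" "y' < W" using yy by auto
        show "F y < F y'"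
        proof (cases "J y = J y'")
          case True
          define n where "n = J y - N"
          have jn: "J y = N + n" using JN[OF y1] by (simp add: n_def)
          have jp: "p (J y) \<le> y" "y < p (Suc (J y))" using Jprop[OF y1(2)] by auto
          have jp': "p (J y) \<le> y'" "y' < p (Suc (J y))" using Jprop[OF y2(2)] True by auto
          have zz: "osub (p (J y)) y < osub (p (J y)) y'" using osub_mono[OF jp(1) yy(2)] .
          have zlt: "osub (p (J y)) y' < fst (x (N + n))"
            using osub_mono[OF jp'] jn by (simp add: x_def seg_def)
          have "hh n (osub (p (J y)) y) < hh n (osub (p (J y)) y')" using hh(1)[OF zz zlt] .
          then show ?thesis using True by (simp add: F_def n_def)
        next
          case False
          then have lt: "J y < J y'" using Jmono[OF yy(2,3)] by simp
          then have "J y - N < J y' - N" using JN[OF y1] by simp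
          then have "Suc (G (J y - N)) \<le> G (J y' - N)" using smG by (simp add: strict_mono_less Suc_leI)
          then have "p (Suc (G (J y - N))) \<le> p (G (J y' - N))" using pmono by simp
          then show ?thesis using Fb[OF y1] Fb[OF y2] by (meson order_less_le_trans order.trans)
        qed
      qed
      then show "emb le (seg \<sigma> c W) (tail d (seg \<sigma> c W))" using tl by simp
    qed
  qed
qed

lemma C2_step:
  fixes le :: "'q \<Rightarrow> 'q \<Rightarrow> bool" and m :: nat
  assumes C1m: "\<And>\<sigma>::ord \<Rightarrow> 'q. finite (range \<sigma>) \<Longrightarrow> \<exists>c. c < {#m#} \<and> indecomposable le (seg \<sigma> c {#m#})"
    and C2prev: "\<And>(\<sigma>::ord \<Rightarrow> 'q) \<gamma>. 0 < m \<Longrightarrow> finite (range \<sigma>) \<Longrightarrow> 0 < \<gamma> \<Longrightarrow> \<gamma> < {#m#} \<Longrightarrow> segm le \<sigma> 0 \<gamma>"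
  shows "\<forall>(\<sigma>::ord \<Rightarrow> 'q) \<gamma>. finite (range \<sigma>) \<longrightarrow> 0 < \<gamma> \<longrightarrow> \<gamma> < {#Suc m#} \<longrightarrow> segm le \<sigma> 0 \<gamma>"
proof -
  have small: "segm le \<sigma> 0 \<gamma>" if "finite (range \<sigma>)" "0 < \<gamma>" "\<gamma> < {#m#}" for \<sigma> :: "ord \<Rightarrow> 'q" and \<gamma>
  proof (cases "m = 0")
    case True
    have "\<forall>x\<in>#\<gamma>. x < (0::nat)" using that(3) True by simp
    then have "\<gamma> = 0" by (metis less_nat_zero_code multiset_nonemptyE)
    then show ?thesis using that(2) by simp
  next
    case False
    then show ?thesis using C2prev that by simp
  qed
  have block: "segm le \<sigma> 0 {#m#}" if fin: "finite (range \<sigma>)" for \<sigma> :: "ord \<Rightarrow> 'q"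
  proof -
    obtain c where c: "c < {#m#}" "indecomposable le (seg \<sigma> c {#m#})" using C1m[OF fin] by blast
    show ?thesis
    proof (cases "c = 0")
      case True
      then show ?thesis using c by (intro segm.base) auto
    next
      case False
      then have "0 < c" by simp
      then have "segm le \<sigma> 0 c" using small[OF fin] c by blast
      moreover have "segm le \<sigma> c {#m#}" using c by (intro segm.base)
      ultimately show ?thesis by (rule segm.trans)
    qed
  qed
  have main: "\<forall>(\<sigma>::ord \<Rightarrow> 'q) \<gamma>. finite (range \<sigma>) \<longrightarrow> 0 < \<gamma> \<longrightarrow> \<gamma> < {#Suc m#} \<longrightarrow> count \<gamma> m = k \<longrightarrow> segm le \<sigma> 0 \<gamma>" for k
  proof (induction k)
    case 0
    show ?case
    proof (intro allI impI)
      fix \<sigma> :: "ord \<Rightarrow> 'q" and \<gamma> :: ord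
      assume a: "finite (range \<sigma>)" "0 < \<gamma>" "\<gamma> < {#Suc m#}" "count \<gamma> m = 0"
      have l1: "\<forall>x\<in>#\<gamma>. x < Suc m" using a(3) by simp
      have l2: "m \<notin># \<gamma>" using a(4) by (simp add: count_eq_zero_iff[symmetric] del: count_eq_zero_iff)
      have "\<forall>x\<in>#\<gamma>. x < m" using l1 l2 by (metis less_Suc_eq)
      then have "\<gamma> < {#m#}" by simp
      then show "segm le \<sigma> 0 \<gamma>" using small a by blast
    qed
  next
    case (Suc k)
    show ?case
    proof (intro allI impI)
      fix \<sigma> :: "ord \<Rightarrow> 'q" and \<gamma> :: ord
      assume a: "finite (range \<sigma>)" "0 < \<gamma>" "\<gamma> < {#Suc m#}" "count \<gamma> m = Suc k"
      define \<gamma>' where "\<gamma>' = \<gamma> - {#m#}"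
      have "0 < count \<gamma> m" using a(4) by simp
      then have min: "m \<in># \<gamma>" by (simp only: count_greater_zero_iff)
      have g: "\<gamma> = add_mset m \<gamma>'" unfolding \<gamma>'_def using insert_DiffM[OF min] by simp
      have l1: "\<forall>x\<in>#\<gamma>. x < Suc m" using a(3) by simp
      have le': "\<forall>x\<in>#\<gamma>'. x \<le> m"
      proof
        fix x assume "x \<in># \<gamma>'"
        then have "x \<in># \<gamma>" unfolding \<gamma>'_def by (rule in_diffD)
        then show "x \<le> m" using l1 by (simp add: less_Suc_eq_le)
      qed
      have cnt: "count \<gamma>' m = k" using a(4) unfolding \<gamma>'_def by simp
      show "segm le \<sigma> 0 \<gamma>"
      proof (cases "\<gamma>' = 0")
        case True
        then show ?thesis using g block[OF a(1)] by simp
      next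
        case False
        have Mx: "Max_mset \<gamma>' \<le> m" using False le' by simp
        then have fm: "filter_mset (\<lambda>e. Max_mset \<gamma>' \<le> e) {#m#} = {#m#}" by simp
        have oa: "oadd {#m#} \<gamma>' = \<gamma>"
          unfolding oadd_nz[OF False, of "{#m#}"] fm using g by simp
        define \<sigma>' where "\<sigma>' x = \<sigma> (oadd {#m#} x)" for x
        have "range \<sigma>' \<subseteq> range \<sigma>" by (auto simp: \<sigma>'_def)
        then have fin': "finite (range \<sigma>')" using a(1) finite_subset by blast
        have "0 < \<gamma>'" using False by simp
        moreover have "\<gamma>' < {#Suc m#}" using le' by (simp add: less_Suc_eq_le)
        ultimately have "segm le \<sigma>' 0 \<gamma>'" using Suc.IH fin' cnt by blast
        then have "segm le \<sigma> (oadd {#m#} 0) (oadd {#m#} \<gamma>')"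
          unfolding \<sigma>'_def by (rule segm_shift)
        then have "segm le \<sigma> {#m#} \<gamma>" using oa by simp
        then show ?thesis using block[OF a(1)] by (rule segm.trans[rotated])
      qed
    qed
  qed
  show ?thesis using main by blast
qed

lemma osub_0l[simp]: "osub 0 a = a"
  by (rule osub_eq) simp

lemma seg0: "seg \<sigma> 0 L = (L, \<sigma>)"
proof -
  have "osub 0 L = L" by (rule osub_eq) simp
  then show ?thesis by (simp add: seg_def)
qed

lemma indec_one: "indecomposable le (seg \<sigma> 0 {#0#})"
  unfolding indecomposable_def seg0 by auto

lemma all_levels:
  fixes n :: nat and le :: "'q \<Rightarrow> 'q \<Rightarrow> bool"
  assumes hyp: "\<And>(P :: nat set) (leP :: nat \<Rightarrow> nat \<Rightarrow> bool).
                  finite P \<Longrightarrow> qo_on P leP \<Longrightarrow> wqo_on (iF leP P (oomega n)) (emb leP)"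
    and Q: "qo_on UNIV le"
  shows "m \<le> n \<Longrightarrow> (\<forall>\<sigma>::ord\<Rightarrow>'q. finite (range \<sigma>) \<longrightarrow> (\<exists>c. c < {#m#} \<and> indecomposable le (seg \<sigma> c {#m#}))) \<and>
     (\<forall>(\<sigma>::ord\<Rightarrow>'q) \<gamma>. finite (range \<sigma>) \<longrightarrow> 0 < \<gamma> \<longrightarrow> \<gamma> < {#Suc m#} \<longrightarrow> segm le \<sigma> 0 \<gamma>)"
proof (induction m)
  case 0
  have C1: "\<forall>\<sigma>::ord\<Rightarrow>'q. finite (range \<sigma>) \<longrightarrow> (\<exists>c. c < {#0#} \<and> indecomposable le (seg \<sigma> c {#0#}))"
  proof (intro allI impI)
    fix \<sigma> :: "ord \<Rightarrow> 'q"
    have "(0::ord) < {#0#}" by simp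
    then show "\<exists>c. c < {#0#} \<and> indecomposable le (seg \<sigma> c {#0#})" using indec_one by blast
  qed
  have C2: "\<forall>(\<sigma>::ord\<Rightarrow>'q) \<gamma>. finite (range \<sigma>) \<longrightarrow> 0 < \<gamma> \<longrightarrow> \<gamma> < {#Suc 0#} \<longrightarrow> segm le \<sigma> 0 \<gamma>"
    by (rule C2_step) (use C1 in auto)
  show ?case using C1 C2 by blast
next
  case (Suc m)
  then have IH1: "\<And>\<sigma>::ord\<Rightarrow>'q. finite (range \<sigma>) \<Longrightarrow> \<exists>c. c < {#m#} \<and> indecomposable le (seg \<sigma> c {#m#})"
    and IH2: "\<And>(\<sigma>::ord\<Rightarrow>'q) \<gamma>. finite (range \<sigma>) \<Longrightarrow> 0 < \<gamma> \<Longrightarrow> \<gamma> < {#Suc m#} \<Longrightarrow> segm le \<sigma> 0 \<gamma>"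
    by auto
  have C1: "\<forall>\<sigma>::ord\<Rightarrow>'q. finite (range \<sigma>) \<longrightarrow> (\<exists>c. c < {#Suc m#} \<and> indecomposable le (seg \<sigma> c {#Suc m#}))"
  proof (intro allI impI)
    fix \<sigma> :: "ord \<Rightarrow> 'q" assume fin: "finite (range \<sigma>)"
    show "\<exists>c. c < {#Suc m#} \<and> indecomposable le (seg \<sigma> c {#Suc m#})"
    proof (rule C1_step[OF fin])
      show "\<And>\<sigma>' \<gamma>. finite (range \<sigma>') \<Longrightarrow> 0 < \<gamma> \<Longrightarrow> \<gamma> < {#Suc m#} \<Longrightarrow> segm le \<sigma>' 0 \<gamma>" by (rule IH2)
    next
      fix x :: "nat \<Rightarrow> 'q tseq"
      assume xs: "\<And>i. fst (x i) < {#Suc m#} \<and> 0 < fst (x i) \<and> indecomposable le (x i) \<and> range (snd (x i)) \<subseteq> range \<sigma>"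
      have mn: "Suc m \<le> n" using Suc.prems .
      show "\<exists>i j. i < j \<and> emb le (x i) (x j)"
        by (rule good_from_hyp[OF hyp Q fin mn xs])
    qed
  qed
  have C2: "\<forall>(\<sigma>::ord\<Rightarrow>'q) \<gamma>. finite (range \<sigma>) \<longrightarrow> 0 < \<gamma> \<longrightarrow> \<gamma> < {#Suc (Suc m)#} \<longrightarrow> segm le \<sigma> 0 \<gamma>"
  proof (rule C2_step)
    show "\<And>\<sigma>::ord\<Rightarrow>'q. finite (range \<sigma>) \<Longrightarrow> \<exists>c. c < {#Suc m#} \<and> indecomposable le (seg \<sigma> c {#Suc m#})"
      using C1 by blast
    show "\<And>(\<sigma>::ord\<Rightarrow>'q) \<gamma>. 0 < Suc m \<Longrightarrow> finite (range \<sigma>) \<Longrightarrow> 0 < \<gamma> \<Longrightarrow> \<gamma> < {#Suc m#} \<Longrightarrow> segm le \<sigma> 0 \<gamma>"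
      by (rule IH2)
  qed
  show ?case using C1 C2 by blast
qed

lemma fr_seg: "finite (range \<sigma>) \<Longrightarrow> finite_range (seg \<sigma> a b)"
  unfolding finite_range_def seg_def by (rule finite_subset[of _ "range \<sigma>"]) auto

theorem proposition4p22:
  fixes n :: nat and le :: "'q \<Rightarrow> 'q \<Rightarrow> bool"
  assumes hyp: "\<And>(P :: nat set) (leP :: nat \<Rightarrow> nat \<Rightarrow> bool).
                  finite P \<Longrightarrow> qo_on P leP \<Longrightarrow> wqo_on (iF leP P (oomega n)) (emb leP)"
    and Q: "qo_on UNIV le"
  shows "(\<forall>s \<in> sF_eq UNIV (oomega n).
            s \<in> iF_eq le UNIV (oomega n) \<or>
            (\<exists>s0 s1. s0 \<in> sF UNIV (oomega n) \<and> s1 \<in> iF_eq le UNIV (oomega n) \<and>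
                     seq_eq s (concat s0 s1)))
       \<and> (\<forall>s \<in> sF UNIV (oomega (Suc n)).
            \<exists>ss. ss \<noteq> [] \<and> (\<forall>t \<in> set ss. t \<in> iF le UNIV (oomega (Suc n))) \<and>
                 seq_eq s (concat_list ss))"
proof -
  have AL: "(\<forall>\<sigma>::ord\<Rightarrow>'q. finite (range \<sigma>) \<longrightarrow> (\<exists>c. c < {#n#} \<and> indecomposable le (seg \<sigma> c {#n#}))) \<and>
     (\<forall>(\<sigma>::ord\<Rightarrow>'q) \<gamma>. finite (range \<sigma>) \<longrightarrow> 0 < \<gamma> \<longrightarrow> \<gamma> < {#Suc n#} \<longrightarrow> segm le \<sigma> 0 \<gamma>)"
    by (rule all_levels[OF hyp Q order_refl])
  define mk where "mk s = (\<lambda>i. if i < fst s then snd s i else snd s 0)" for s :: "'q tseq"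
  have mkfin: "finite (range (mk s))" if "0 < fst s" "finite_range s" for s :: "'q tseq"
  proof -
    have "range (mk s) \<subseteq> snd s ` {i. i < fst s}" using that(1) by (auto simp: mk_def)
    then show ?thesis using that(2) finite_subset unfolding finite_range_def by blast
  qed
  have mkeq: "seq_eq s (seg (mk s) 0 (fst s))" for s :: "'q tseq"
    by (simp add: seg0 seq_eq_def mk_def)
  show ?thesis
  proof (intro conjI ballI)
    fix s :: "'q tseq" assume s: "s \<in> sF_eq UNIV (oomega n)"
    then have fs: "fst s = {#n#}" "finite_range s" by (auto simp: sF_eq_def oomega_def)
    then have fin: "finite (range (mk s))" by (intro mkfin) auto
    obtain c where c: "c < {#n#}" "indecomposable le (seg (mk s) c {#n#})" using AL fin by blast
    show "s \<in> iF_eq le UNIV (oomega n) \<or>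
            (\<exists>s0 s1. s0 \<in> sF UNIV (oomega n) \<and> s1 \<in> iF_eq le UNIV (oomega n) \<and> seq_eq s (concat s0 s1))"
    proof (cases "c = 0")
      case True
      then have "indecomposable le s" using c(2) fs(1) indec_cong[OF seq_eq_sym[OF mkeq[of s]]] by simp
      then show ?thesis using s by (simp add: iF_eq_def)
    next
      case False
      have lens: "fst (seg (mk s) 0 c) = c" "fst (seg (mk s) c {#n#}) = {#n#}"
        using c(1) by (simp_all add: seg0 seg_def osub_omega)
      have s0: "seg (mk s) 0 c \<in> sF UNIV (oomega n)"
        using False c(1) lens fr_seg[OF fin] by (simp add: sF_def seqs_over_def oomega_def)
      have s1: "seg (mk s) c {#n#} \<in> iF_eq le UNIV (oomega n)"
        using c lens fr_seg[OF fin] by (simp add: iF_eq_def sF_eq_def seqs_over_def oomega_def)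
      have "seq_eq s (concat (seg (mk s) 0 c) (seg (mk s) c {#n#}))"
        using mkeq[of s] seg_concat[of 0 c "{#n#}" "mk s"] c(1) fs(1) seq_eq_trans by simp
      then show ?thesis using s0 s1 by blast
    qed
  next
    fix s :: "'q tseq" assume s: "s \<in> sF UNIV (oomega (Suc n))"
    then have fs: "0 < fst s" "fst s < {#Suc n#}" "finite_range s"
      by (auto simp: sF_def seqs_over_def oomega_def)
    have fin: "finite (range (mk s))" using fs by (intro mkfin) auto
    have "segm le (mk s) 0 (fst s)" using AL fin fs by blast
    then obtain ss where ss: "ss \<noteq> []"
      "\<forall>t\<in>set ss. \<exists>c d. 0 \<le> c \<and> c < d \<and> d \<le> fst s \<and> t = seg (mk s) c d \<and> indecomposable le t"
      "seq_eq (seg (mk s) 0 (fst s)) (concat_list ss)"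
      using segm_list by blast
    have "t \<in> iF le UNIV (oomega (Suc n))" if t: "t \<in> set ss" for t
    proof -
      obtain c d where cd: "c < d" "d \<le> fst s" "t = seg (mk s) c d" "indecomposable le t" using ss(2) t by blast
      have "fst t \<le> d" using cd osub_le[of c d] by (simp add: seg_def)
      then have "fst t < {#Suc n#}" using cd(2) fs(2) by (meson order_le_less_trans)
      moreover have "0 < fst t" using cd osub_pos by (simp add: seg_def)
      ultimately show ?thesis using cd fr_seg[OF fin]
        by (simp add: iF_def sF_def seqs_over_def oomega_def)
    qed
    moreover have "seq_eq s (concat_list ss)" using mkeq[of s] ss(3) by (rule seq_eq_trans)
    ultimately show "\<exists>ss. ss \<noteq> [] \<and> (\<forall>t \<in> set ss. t \<in> iF le UNIV (oomega (Suc n))) \<and> seq_eq s (concat_list ss)"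
      using ss(1) by blast
  qed
qed

end
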